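(* On $\mathrm{Mon}_+$ consider the relation $\varphi_0\sim\varphi_1$ iff there exist $v\in L^2([0,1],H^1_0([0,1]))$ and a Lagrangian flow $\varphi$ associated with $v$ such that $\varphi(0,x)=\varphi_0(x)$ and $\varphi(1,x)=\varphi_1(x)$ for all $x\in[0,1]$. This relation is symmetric and transitive, and in fact $\varphi_0\sim\varphi_1$ holds for every pair $\varphi_0,\varphi_1\in\mathrm{Mon}_+$.
   Context: $\mathrm{Mon}_+$ denotes the set of nondecreasing functions $f:[0,1]\to[0,1]$ with $f(0)=0$ and $f(1)=1$. Definition (Lagrangian flow): let $v\in L^1([0,1],C([0,1]))$. A map $\varphi:[0,1]\times[0,1]\to[0,1]$, $(t,x)\mapsto\varphi(t,x)$, is a Lagrangian flow associated with $v$ if (i) $x\mapsto\varphi(t,x)$ is nondecreasing for every $t$, and (ii) for every $x$ the map $t\mapsto\varphi(t,x)$ is absolutely continuous and $\varphi(t,x)-\varphi(s,x)=\int_s^t v(r,\varphi(r,x))\,dr$ for all $0\le s<t\le 1$. *)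

theory Defs
  imports "HOL-Analysis.Analysis"
begin

definition Mon_plus :: "(real \<Rightarrow> real) set" where
  "Mon_plus = {f. mono_on {0..1} f \<and> f ` {0..1} \<subseteq> {0..1} \<and> f 0 = 0 \<and> f 1 = 1}"

definition abs_cont_on :: "real \<Rightarrow> real \<Rightarrow> (real \<Rightarrow> real) \<Rightarrow> bool" where
  "abs_cont_on a b f \<longleftrightarrow>
     (\<forall>\<epsilon>>0. \<exists>\<delta>>0. \<forall>(n::nat) (I :: nat \<Rightarrow> real \<times> real).
        (\<forall>i<n. a \<le> fst (I i) \<and> fst (I i) \<le> snd (I i) \<and> snd (I i) \<le> b) \<and>
        (\<forall>i<n. \<forall>j<n. i \<noteq> j \<longrightarrow> snd (I i) \<le> fst (I j) \<or> snd (I j) \<le> fst (I i)) \<and>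
        (\<Sum>i<n. snd (I i) - fst (I i)) < \<delta>
        \<longrightarrow> (\<Sum>i<n. \<bar>f (snd (I i)) - f (fst (I i))\<bar>) < \<epsilon>)"

text \<open>u belongs to H^1_0([0,1]) with weak derivative g: g is square integrable on [0,1],
  u(x) = int_0^x g for x in [0,1], and u(1) = 0 (u(0) = 0 is then automatic).\<close>
definition H10_with_deriv :: "(real \<Rightarrow> real) \<Rightarrow> (real \<Rightarrow> real) \<Rightarrow> bool" where
  "H10_with_deriv u g \<longleftrightarrow>
     g \<in> borel_measurable lborel \<and>
     set_integrable lborel {0..1} (\<lambda>y. (g y)\<^sup>2) \<and>
     set_integrable lborel {0..1} g \<and>
     (\<forall>x\<in>{0..1}. u x = (LINT y:{0..x}|lborel. g y)) \<and>
     u 1 = 0"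

text \<open>v \<in> L^2([0,1], H^1_0([0,1])), represented by a (time-pointwise) representative
  v t = v(t,.) with jointly measurable spatial derivative w(t,.) and
  int_0^1 ||v(t)||_{H^1_0}^2 dt = int int w^2 < infinity.\<close>
definition L2_H10 :: "(real \<Rightarrow> real \<Rightarrow> real) \<Rightarrow> bool" where
  "L2_H10 v \<longleftrightarrow>
     (\<exists>w :: real \<Rightarrow> real \<Rightarrow> real.
        (\<lambda>p. w (fst p) (snd p)) \<in> borel_measurable (borel :: (real \<times> real) measure) \<and>
        set_integrable (lborel :: (real \<times> real) measure) ({0..1} \<times> {0..1})
           (\<lambda>p. (w (fst p) (snd p))\<^sup>2) \<and>
        (\<forall>t\<in>{0..1}. H10_with_deriv (v t) (w t)))"

definition lagrangian_flow :: "(real \<Rightarrow> real \<Rightarrow> real) \<Rightarrow> (real \<Rightarrow> real \<Rightarrow> real) \<Rightarrow> bool" where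
  "lagrangian_flow v \<phi> \<longleftrightarrow>
     (\<forall>t\<in>{0..1}. \<forall>x\<in>{0..1}. \<phi> t x \<in> {0..1}) \<and>
     (\<forall>t\<in>{0..1}. mono_on {0..1} (\<phi> t)) \<and>
     (\<forall>x\<in>{0..1}. abs_cont_on 0 1 (\<lambda>t. \<phi> t x) \<and>
        (\<forall>s t. 0 \<le> s \<and> s < t \<and> t \<le> 1 \<longrightarrow>
           set_integrable lborel {s..t} (\<lambda>r. v r (\<phi> r x)) \<and>
           \<phi> t x - \<phi> s x = (LINT r:{s..t}|lborel. v r (\<phi> r x))))"

definition flow_rel :: "(real \<Rightarrow> real) \<Rightarrow> (real \<Rightarrow> real) \<Rightarrow> bool" where
  "flow_rel \<phi>0 \<phi>1 \<longleftrightarrow>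
     (\<exists>v \<phi>. L2_H10 v \<and> lagrangian_flow v \<phi> \<and>
        (\<forall>x\<in>{0..1}. \<phi> 0 x = \<phi>0 x \<and> \<phi> 1 x = \<phi>1 x))"

end

theory Submission
  imports Defs
begin

definition cc :: "real \<Rightarrow> real" where "cc t = (cos (pi*t))^2"
definition DD :: "real \<Rightarrow> real" where "DD t = - pi * sin (2*pi*t)"

lemma cc_bounds: "0 \<le> cc t" "cc t \<le> 1"
  unfolding cc_def apply simp
  using sin_cos_squared_add[of "pi*t"] zero_le_power2[of "sin (pi*t)"] by linarith

lemma cc_vals: "cc 0 = 1" "cc 1 = 1" "cc (1/2) = 0"
  unfolding cc_def by (auto simp: cos_pi_half)

lemma DD_sq: "(DD t)^2 = 4 * pi^2 * cc t * (1 - cc t)"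
proof -
  have "sin (2*pi*t) = 2 * sin (pi*t) * cos (pi*t)"
    using sin_double[of "pi*t"] by (simp add: mult.assoc)
  moreover have "(sin (pi*t))^2 = 1 - (cos (pi*t))^2" by (simp add: sin_squared_eq)
  ultimately have "(sin (2*pi*t))^2 = 4 * (cos (pi*t))^2 * (1 - (cos (pi*t))^2)"
    by (simp add: power_mult_distrib)
  then show ?thesis unfolding DD_def cc_def
    by (simp add: power_mult_distrib)
qed

lemma DD_zero: "cc t = 0 \<or> cc t = 1 \<Longrightarrow> DD t = 0"
  using DD_sq[of t] by auto

lemma cc_deriv: "(cc has_real_derivative DD t) (at t)"
proof -
  have "((\<lambda>t. (cos (pi*t))^2) has_real_derivative (2 * cos (pi*t) * (- sin (pi*t) * pi))) (at t)"
    by (auto intro!: derivative_eq_intros)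
  moreover have "2 * cos (pi*t) * (- sin (pi*t) * pi) = DD t"
    unfolding DD_def using sin_double[of "pi*t"] by (simp add: algebra_simps)
  ultimately show ?thesis unfolding cc_def[abs_def] by simp
qed

lemma DD_cont: "continuous_on S DD"
  unfolding DD_def by (intro continuous_intros)

lemma DD_bound: "\<bar>DD t\<bar> \<le> pi"
  unfolding DD_def by (simp add: abs_mult)


definition al :: "real \<Rightarrow> real" where "al t = - DD t / (1 - cc t)"
definition be :: "real \<Rightarrow> real" where "be t = DD t / cc t"
definition pp :: "real \<Rightarrow> real" where "pp t = (1 - cc t) / 2"
definition qq :: "real \<Rightarrow> real" where "qq t = (1 + cc t) / 2"
definition ww :: "real \<Rightarrow> real \<Rightarrow> real" where
  "ww t y = al t + (be t - al t) * indicator {pp t..qq t} y"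
definition vv :: "real \<Rightarrow> real \<Rightarrow> real" where
  "vv t y = al t * y + (be t - al t) * max 0 (min y (qq t) - pp t)"

lemma pq_bounds: "0 \<le> pp t" "pp t \<le> qq t" "qq t \<le> 1" "qq t - pp t = cc t"
  using cc_bounds[of t] unfolding pp_def qq_def by (auto simp: field_simps)

lemma ww_meas[measurable]: "ww t \<in> borel_measurable lborel"
  unfolding ww_def by measurable

lemma ww_integrable: "set_integrable lborel {0..x} (ww t)"
proof -
  have "integrable lborel (\<lambda>y. indicator {0..x} y *\<^sub>R ww t y)"
    by (rule integrableI_bounded_set_indicator[where B="\<bar>al t\<bar> + \<bar>be t - al t\<bar>"])
       (auto simp: ww_def indicator_def emeasure_lborel_Icc_eq)
  then show ?thesis unfolding set_integrable_def .
qed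

lemma ww_lint: assumes "0 \<le> x" shows "(LINT y:{0..x}|lborel. ww t y) = vv t x"
proof -
  have e: "(\<lambda>y. indicator {0..x} y *\<^sub>R ww t y) = (\<lambda>y. al t * indicator {0..x} y
     + (be t - al t) * indicator {max 0 (pp t)..min x (qq t)} y)"
    by (auto simp: ww_def indicator_def fun_eq_iff)
  have "(LINT y:{0..x}|lborel. ww t y) = al t * measure lborel {0..x}
     + (be t - al t) * measure lborel {max 0 (pp t)..min x (qq t)}"
    unfolding set_lebesgue_integral_def e
    apply (subst Bochner_Integration.integral_add)
      apply (auto intro!: integrable_real_indicator integrable_mult_right simp: emeasure_lborel_Icc_eq)
    done
  also have "\<dots> = vv t x"
    using assms pq_bounds[of t] unfolding vv_def by (auto simp: max_def min_def)
  finally show ?thesis .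
qed

lemma vv_one: "vv t 1 = 0"
proof -
  have "vv t 1 = al t * (1 - cc t) + be t * cc t"
    using pq_bounds[of t] unfolding vv_def by (simp add: algebra_simps)
  also have "\<dots> = 0"
  proof (cases "cc t = 0 \<or> cc t = 1")
    case True then show ?thesis using DD_zero[of t] unfolding al_def be_def by auto
  next
    case False then show ?thesis unfolding al_def be_def by (auto simp: field_simps)
  qed
  finally show ?thesis .
qed

lemma cc_meas[measurable]: "cc \<in> borel_measurable borel"
  unfolding cc_def by (intro borel_measurable_continuous_onI continuous_intros)
lemma DD_meas[measurable]: "DD \<in> borel_measurable borel"
  by (intro borel_measurable_continuous_onI DD_cont)
lemma al_meas[measurable]: "al \<in> borel_measurable borel"
  unfolding al_def[abs_def] by measurable
lemma be_meas[measurable]: "be \<in> borel_measurable borel"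
  unfolding be_def[abs_def] by measurable
lemma pp_meas[measurable]: "pp \<in> borel_measurable borel"
  unfolding pp_def[abs_def] by measurable
lemma qq_meas[measurable]: "qq \<in> borel_measurable borel"
  unfolding qq_def[abs_def] by measurable

lemma ww_joint_meas: "(\<lambda>p. ww (fst p) (snd p)) \<in> borel_measurable (borel :: (real \<times> real) measure)"
proof -
  have e: "(\<lambda>p. ww (fst p) (snd p)) = (\<lambda>p::real\<times>real. al (fst p) + (be (fst p) - al (fst p)) *
      (if pp (fst p) \<le> snd p \<and> snd p \<le> qq (fst p) then 1 else 0))"
    by (auto simp: ww_def indicator_def fun_eq_iff)
  show ?thesis unfolding e borel_prod[symmetric] by measurable
qed

lemma inner_sq: "(LINT y|lborel. indicator {0..1} y * (ww t y)^2) = (al t)^2 * (1 - cc t) + (be t)^2 * cc t"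
    "integrable lborel (\<lambda>y. indicator {0..1} y * (ww t y)^2)"
proof -
  have e: "(\<lambda>y. indicator {0..1} y * (ww t y)^2) = (\<lambda>y. (al t)^2 * indicator {0..<pp t} y
     + (al t)^2 * indicator {qq t<..1} y + (be t)^2 * indicator {pp t..qq t} y)"
    using pq_bounds[of t] by (auto simp: ww_def indicator_def fun_eq_iff)
  show "integrable lborel (\<lambda>y. indicator {0..1} y * (ww t y)^2)"
    unfolding e using pq_bounds[of t] by (auto intro!: integrable_real_indicator integrable_mult_right Bochner_Integration.integrable_add)
  have "(LINT y|lborel. indicator {0..1} y * (ww t y)^2) = (al t)^2 * measure lborel {0..<pp t}
     + (al t)^2 * measure lborel {qq t<..1} + (be t)^2 * measure lborel {pp t..qq t}"
    unfolding e using pq_bounds[of t]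
    apply (subst Bochner_Integration.integral_add)
      apply (auto intro!: integrable_real_indicator integrable_mult_right Bochner_Integration.integrable_add)
    done
  also have "\<dots> = (al t)^2 * (1 - cc t) + (be t)^2 * cc t"
    using pq_bounds[of t] by (simp add: pp_def qq_def field_simps)
  finally show "(LINT y|lborel. indicator {0..1} y * (ww t y)^2) = (al t)^2 * (1 - cc t) + (be t)^2 * cc t" .
qed

lemma sq_bound: "(al t)^2 * (1 - cc t) + (be t)^2 * cc t \<le> 4 * pi^2"
proof (cases "cc t = 0 \<or> cc t = 1")
  case True then show ?thesis using DD_zero[of t] unfolding al_def be_def by auto
next
  case False
  then have c: "0 < cc t" "cc t < 1" using cc_bounds[of t] by auto
  have "(al t)^2 * (1 - cc t) = (DD t)^2 / (1 - cc t)"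
    using c unfolding al_def by (simp add: power_divide power2_eq_square)
  also have "\<dots> = 4 * pi^2 * cc t" using c by (simp add: DD_sq field_simps)
  finally have 1: "(al t)^2 * (1 - cc t) = 4 * pi^2 * cc t" .
  have "(be t)^2 * cc t = (DD t)^2 / cc t"
    using c unfolding be_def by (simp add: power_divide power2_eq_square)
  also have "\<dots> = 4 * pi^2 * (1 - cc t)" using c by (simp add: DD_sq field_simps)
  finally have 2: "(be t)^2 * cc t = 4 * pi^2 * (1 - cc t)" .
  show ?thesis using 1 2 by (simp add: algebra_simps)
qed

lemma inner_nn: "(\<integral>\<^sup>+y. ennreal (indicator {0..1} y * (ww t y)^2) \<partial>lborel) \<le> ennreal (4 * pi^2)"
proof -
  have "(\<integral>\<^sup>+y. ennreal (indicator {0..1} y * (ww t y)^2) \<partial>lborel)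
        = ennreal (LINT y|lborel. indicator {0..1} y * (ww t y)^2)"
    by (rule nn_integral_eq_integral[OF inner_sq(2)]) auto
  also have "\<dots> \<le> ennreal (4 * pi^2)"
    unfolding inner_sq(1) using sq_bound[of t] by (rule ennreal_leI)
  finally show ?thesis .
qed

lemma prod_integrable:
  "set_integrable (lborel :: (real \<times> real) measure) ({0..1} \<times> {0..1}) (\<lambda>p. (ww (fst p) (snd p))\<^sup>2)"
proof -
  let ?F = "\<lambda>p::real\<times>real. indicator ({0..1} \<times> {0..1}) p *\<^sub>R (ww (fst p) (snd p))\<^sup>2"
  have sq: "(\<lambda>p::real\<times>real. (ww (fst p) (snd p))\<^sup>2) \<in> borel_measurable borel"
    using ww_joint_meas by (rule borel_measurable_power)
  have st: "({0..1} \<times> {0..1} :: (real \<times> real) set) \<in> sets borel"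
    by (intro borel_closed closed_Times) auto
  have mb: "?F \<in> borel_measurable borel"
    by (intro borel_measurable_scaleR borel_measurable_indicator st sq)
  have mb2: "(\<lambda>p. ennreal (?F p)) \<in> borel_measurable (lborel \<Otimes>\<^sub>M lborel)"
    unfolding lborel_prod measurable_lborel1 using mb by measurable
  have "(\<integral>\<^sup>+p. ennreal (?F p) \<partial>lborel) = (\<integral>\<^sup>+p. ennreal (?F p) \<partial>(lborel \<Otimes>\<^sub>M lborel))"
    by (simp add: lborel_prod)
  also have "\<dots> = (\<integral>\<^sup>+x. \<integral>\<^sup>+y. ennreal (?F (x,y)) \<partial>lborel \<partial>lborel)"
    by (rule lborel.nn_integral_fst[symmetric, OF mb2])
  also have "\<dots> \<le> (\<integral>\<^sup>+x. ennreal (4 * pi^2) * indicator {0..1::real} x \<partial>lborel)"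
  proof (rule nn_integral_mono, goal_cases)
    case (1 x)
    show "(\<integral>\<^sup>+y. ennreal (?F (x,y)) \<partial>lborel) \<le> ennreal (4 * pi^2) * indicator {0..1} x"
    proof (cases "x \<in> {0..1}")
      case True
      then have "(\<lambda>y. ennreal (?F (x,y))) = (\<lambda>y. ennreal (indicator {0..1} y * (ww x y)^2))"
        by (auto simp: indicator_def fun_eq_iff)
      then show ?thesis using True inner_nn[of x] by simp
    next
      case False
      then have "(\<lambda>y. ennreal (?F (x,y))) = (\<lambda>y. 0)"
        by (auto simp: indicator_def fun_eq_iff)
      then show ?thesis by simp
    qed
  qed
  also have "\<dots> < \<infinity>"
    by (subst nn_integral_cmult_indicator) (auto simp: ennreal_mult_less_top)
  finally have fin: "(\<integral>\<^sup>+p. ennreal (?F p) \<partial>lborel) < \<infinity>" .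
  have "integrable lborel ?F"
    by (rule integrableI_nonneg) (use mb fin in \<open>auto simp: measurable_lborel1\<close>)
  then show ?thesis unfolding set_integrable_def .
qed

lemma DD_half: "DD (1/2) = 0" unfolding DD_def by simp

lemma vv_on: assumes "0 \<le> h" "h \<le> 1" shows "vv t (1/2 + cc t * (h - 1/2)) = DD t * (h - 1/2)"
proof -
  let ?y = "1/2 + cc t * (h - 1/2)"
  have c: "0 \<le> cc t" "cc t \<le> 1" using cc_bounds by auto
  have "?y - pp t = cc t * h" unfolding pp_def by (simp add: field_simps)
  moreover have "qq t - ?y = cc t * (1 - h)" unfolding qq_def by (simp add: field_simps)
  moreover have "0 \<le> cc t * h" "0 \<le> cc t * (1 - h)" using c assms by auto
  ultimately have y1: "?y \<le> qq t" and y2: "pp t \<le> ?y" and y3: "?y - pp t = cc t * h" by linarith+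
  have "min ?y (qq t) = ?y" using y1 by simp
  moreover have "max 0 (?y - pp t) = ?y - pp t" using y2 by simp
  ultimately have "max 0 (min ?y (qq t) - pp t) = cc t * h" using y3 by simp
  then have "vv t ?y = al t * ?y + (be t - al t) * (cc t * h)" unfolding vv_def by simp
  also have "\<dots> = DD t * (h - 1/2)"
  proof (cases "cc t = 0 \<or> cc t = 1")
    case True then show ?thesis using DD_zero[of t] unfolding al_def be_def by auto
  next
    case False
    then have "cc t \<noteq> 0" "1 - cc t \<noteq> 0" by auto
    then have a1: "al t * (1 - cc t) = - DD t" and b1: "be t * cc t = DD t"
      unfolding al_def be_def by auto
    have "al t * ?y + (be t - al t) * (cc t * h) = (al t * (1 - cc t))/2 + (be t * cc t) * h"
      by (simp add: field_simps)
    then show ?thesis using a1 b1 by (simp add: algebra_simps)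
  qed
  finally show ?thesis .
qed

definition phi :: "(real \<Rightarrow> real) \<Rightarrow> (real \<Rightarrow> real) \<Rightarrow> real \<Rightarrow> real \<Rightarrow> real" where
  "phi f g t x = 1/2 + cc (min t (1/2)) * (f x - 1/2) + cc (max t (1/2)) * (g x - 1/2)"

definition GG :: "real \<Rightarrow> real \<Rightarrow> real \<Rightarrow> real" where
  "GG a b r = DD (min r (1/2)) * (a - 1/2) + DD (max r (1/2)) * (b - 1/2)"

lemma integrand: assumes "0 \<le> a" "a \<le> 1" "0 \<le> b" "b \<le> 1"
  shows "vv r (phi (\<lambda>_. a) (\<lambda>_. b) r x) = GG a b r"
proof (cases "r \<le> 1/2")
  case True
  then show ?thesis using vv_on[of a r] assms unfolding phi_def GG_def
    by (simp add: cc_vals DD_half min_def max_def)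
next
  case False
  then show ?thesis using vv_on[of b r] assms unfolding phi_def GG_def
    by (simp add: cc_vals DD_half min_def max_def)
qed

lemma ftc_min: assumes "s \<le> t"
  shows "((\<lambda>r. DD (min r (1/2))) has_integral (cc (min t (1/2)) - cc (min s (1/2)))) {s..t}"
proof (rule fundamental_theorem_of_calculus_interior_strong[where S="{1/2}"])
  show "continuous_on {s..t} (\<lambda>r. cc (min r (1/2)))"
    unfolding cc_def by (intro continuous_intros)
  fix x assume x: "x \<in> {s<..<t} - {1/2}"
  show "((\<lambda>r. cc (min r (1/2))) has_vector_derivative DD (min x (1/2))) (at x)"
    unfolding has_real_derivative_iff_has_vector_derivative[symmetric]
  proof (cases "x < 1/2")
    case True
    show "((\<lambda>r. cc (min r (1/2))) has_real_derivative DD (min x (1/2))) (at x)"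
    proof -
      have "((\<lambda>r. cc (min r (1/2))) has_real_derivative DD x) (at x)"
        by (rule has_field_derivative_transform_within_open[OF cc_deriv, where S="{..<1/2}"])
           (use True in auto)
      then show ?thesis using True by (simp add: min_def)
    qed
  next
    case False
    then have "x > 1/2" using x by auto
    then show "((\<lambda>r. cc (min r (1/2))) has_real_derivative DD (min x (1/2))) (at x)"
    proof -
      have "((\<lambda>r. cc (min r (1/2))) has_real_derivative 0) (at x)"
        by (rule has_field_derivative_transform_within_open[OF DERIV_const[of "cc (1/2)"], where S="{1/2<..}"])
           (use \<open>x > 1/2\<close> in auto)
      then show ?thesis using \<open>x > 1/2\<close> by (simp add: min_def DD_half)
    qed
  qed
qed (use assms in auto)

lemma ftc_max: assumes "s \<le> t"
  shows "((\<lambda>r. DD (max r (1/2))) has_integral (cc (max t (1/2)) - cc (max s (1/2)))) {s..t}"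
proof (rule fundamental_theorem_of_calculus_interior_strong[where S="{1/2}"])
  show "continuous_on {s..t} (\<lambda>r. cc (max r (1/2)))"
    unfolding cc_def by (intro continuous_intros)
  fix x assume x: "x \<in> {s<..<t} - {1/2}"
  show "((\<lambda>r. cc (max r (1/2))) has_vector_derivative DD (max x (1/2))) (at x)"
    unfolding has_real_derivative_iff_has_vector_derivative[symmetric]
  proof (cases "x > 1/2")
    case True
    show "((\<lambda>r. cc (max r (1/2))) has_real_derivative DD (max x (1/2))) (at x)"
    proof -
      have "((\<lambda>r. cc (max r (1/2))) has_real_derivative DD x) (at x)"
        by (rule has_field_derivative_transform_within_open[OF cc_deriv, where S="{1/2<..}"])
           (use True in auto)
      then show ?thesis using True by (simp add: max_def)
    qed
  next
    case False
    then have "x < 1/2" using x by auto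
    then show "((\<lambda>r. cc (max r (1/2))) has_real_derivative DD (max x (1/2))) (at x)"
    proof -
      have "((\<lambda>r. cc (max r (1/2))) has_real_derivative 0) (at x)"
        by (rule has_field_derivative_transform_within_open[OF DERIV_const[of "cc (1/2)"], where S="{..<1/2}"])
           (use \<open>x < 1/2\<close> in auto)
      then show ?thesis using \<open>x < 1/2\<close> by (simp add: max_def DD_half)
    qed
  qed
qed (use assms in auto)

lemma GG_integral: assumes "s \<le> t"
  shows "(GG a b has_integral (phi (\<lambda>_. a) (\<lambda>_. b) t x - phi (\<lambda>_. a) (\<lambda>_. b) s x)) {s..t}"
proof -
  have "((\<lambda>r. DD (min r (1/2)) * (a - 1/2) + DD (max r (1/2)) * (b - 1/2)) has_integral
     (cc (min t (1/2)) - cc (min s (1/2))) * (a - 1/2) + (cc (max t (1/2)) - cc (max s (1/2))) * (b - 1/2)) {s..t}"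
    by (intro has_integral_add has_integral_mult_left ftc_min ftc_max assms)
  then show ?thesis unfolding GG_def phi_def by (simp add: algebra_simps)
qed

lemma GG_cont: "continuous_on S (GG a b)"
  unfolding GG_def[abs_def] DD_def by (intro continuous_intros)

lemma GG_bound: assumes "0 \<le> a" "a \<le> 1" "0 \<le> b" "b \<le> 1" shows "\<bar>GG a b r\<bar> \<le> pi"
proof -
  have "\<bar>GG a b r\<bar> \<le> \<bar>DD (min r (1/2))\<bar> * \<bar>a - 1/2\<bar> + \<bar>DD (max r (1/2))\<bar> * \<bar>b - 1/2\<bar>"
    unfolding GG_def by (metis abs_mult abs_triangle_ineq)
  also have "\<dots> \<le> pi * (1/2) + pi * (1/2)"
    using assms by (intro add_mono mult_mono DD_bound) (auto split: abs_split)
  finally show ?thesis by simp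
qed

lemma lip_abs_cont:
  assumes lip: "\<And>s t. a \<le> s \<Longrightarrow> s \<le> t \<Longrightarrow> t \<le> b \<Longrightarrow> \<bar>F t - F s\<bar> \<le> L * (t - s)"
    and L: "L > 0"
  shows "abs_cont_on a b F"
  unfolding abs_cont_on_def
proof (intro allI impI)
  fix e :: real assume e: "e > 0"
  show "\<exists>d>0. \<forall>(n::nat) (I :: nat \<Rightarrow> real \<times> real).
        (\<forall>i<n. a \<le> fst (I i) \<and> fst (I i) \<le> snd (I i) \<and> snd (I i) \<le> b) \<and>
        (\<forall>i<n. \<forall>j<n. i \<noteq> j \<longrightarrow> snd (I i) \<le> fst (I j) \<or> snd (I j) \<le> fst (I i)) \<and>
        (\<Sum>i<n. snd (I i) - fst (I i)) < d
        \<longrightarrow> (\<Sum>i<n. \<bar>F (snd (I i)) - F (fst (I i))\<bar>) < e"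
  proof (intro exI[of _ "e / L"] conjI allI impI)
    show "e / L > 0" using e L by simp
    fix n :: nat and I :: "nat \<Rightarrow> real \<times> real"
    assume h: "(\<forall>i<n. a \<le> fst (I i) \<and> fst (I i) \<le> snd (I i) \<and> snd (I i) \<le> b) \<and>
        (\<forall>i<n. \<forall>j<n. i \<noteq> j \<longrightarrow> snd (I i) \<le> fst (I j) \<or> snd (I j) \<le> fst (I i)) \<and>
        (\<Sum>i<n. snd (I i) - fst (I i)) < e / L"
    have "(\<Sum>i<n. \<bar>F (snd (I i)) - F (fst (I i))\<bar>) \<le> (\<Sum>i<n. L * (snd (I i) - fst (I i)))"
      using h by (intro sum_mono lip) auto
    also have "\<dots> = L * (\<Sum>i<n. snd (I i) - fst (I i))" by (simp add: sum_distrib_left)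
    also have "\<dots> < L * (e / L)" using h L by (intro mult_strict_left_mono) auto
    also have "\<dots> = e" using L by simp
    finally show "(\<Sum>i<n. \<bar>F (snd (I i)) - F (fst (I i))\<bar>) < e" .
  qed
qed


lemma flow_ok:
  assumes fr: "\<And>x. x \<in> {0..1} \<Longrightarrow> f x \<in> {0..1}" and gr: "\<And>x. x \<in> {0..1} \<Longrightarrow> g x \<in> {0..1}"
    and fm: "mono_on {0..1} f" and gm: "mono_on {0..1} g"
  shows "lagrangian_flow vv (phi f g)"
  unfolding lagrangian_flow_def
proof (intro conjI ballI allI impI)
  fix t x :: real assume t: "t \<in> {0..1}" and x: "x \<in> {0..1}"
  have c: "0 \<le> cc t" "cc t \<le> 1" using cc_bounds by auto
  show "phi f g t x \<in> {0..1}"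
  proof (cases "t \<le> 1/2")
    case True
    have e: "phi f g t x = 1/2 + cc t * (f x - 1/2)"
      using True unfolding phi_def by (simp add: min_absorb1 max_absorb2 cc_vals)
    have "0 \<le> cc t * f x" using c fr[OF x] by simp
    moreover have "cc t * f x \<le> cc t * 1" using c fr[OF x] by (intro mult_left_mono) auto
    ultimately show ?thesis unfolding e using c by (simp add: right_diff_distrib)
  next
    case False
    have e: "phi f g t x = 1/2 + cc t * (g x - 1/2)"
      using False unfolding phi_def by (simp add: min_absorb2 max_absorb1 cc_vals)
    have "0 \<le> cc t * g x" using c gr[OF x] by simp
    moreover have "cc t * g x \<le> cc t * 1" using c gr[OF x] by (intro mult_left_mono) auto
    ultimately show ?thesis unfolding e using c by (simp add: right_diff_distrib)
  qed
next
  fix t :: real assume t: "t \<in> {0..1}"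
  show "mono_on {0..1} (phi f g t)"
  proof (rule mono_onI)
    fix x y :: real assume "x \<in> {0..1}" "y \<in> {0..1}" "x \<le> y"
    then have "f x \<le> f y" "g x \<le> g y" using fm gm by (auto simp: mono_on_def)
    moreover have "0 \<le> cc (min t (1/2))" "0 \<le> cc (max t (1/2))" using cc_bounds by auto
    ultimately have "cc (min t (1/2)) * (f x - 1/2) \<le> cc (min t (1/2)) * (f y - 1/2)"
        "cc (max t (1/2)) * (g x - 1/2) \<le> cc (max t (1/2)) * (g y - 1/2)"
      by (auto intro!: mult_left_mono)
    then show "phi f g t x \<le> phi f g t y" unfolding phi_def by simp
  qed
next
  fix x :: real assume x: "x \<in> {0..1}"
  define a where "a = f x"
  define b where "b = g x"
  have ab: "0 \<le> a" "a \<le> 1" "0 \<le> b" "b \<le> 1" using fr[OF x] gr[OF x] by (auto simp: a_def b_def)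
  have pe: "\<And>r. phi f g r x = phi (\<lambda>_. a) (\<lambda>_. b) r x" unfolding phi_def a_def b_def by simp
  have eqf: "(\<lambda>r. vv r (phi f g r x)) = GG a b"
  proof
    fix r show "vv r (phi f g r x) = GG a b r" unfolding pe by (rule integrand[OF ab])
  qed
  have int: "(GG a b has_integral (phi f g t x - phi f g s x)) {s..t}" if "s \<le> t" for s t
    unfolding pe by (rule GG_integral[OF that])
  show "abs_cont_on 0 1 (\<lambda>t. phi f g t x)"
  proof (rule lip_abs_cont[where L=pi])
    fix s t :: real assume "0 \<le> s" "s \<le> t" "t \<le> 1"
    have "norm (phi f g t x - phi f g s x) \<le> pi * Henstock_Kurzweil_Integration.content {s..t}"
      by (rule has_integral_bound_real[where S="{}"]) (use int[OF \<open>s \<le> t\<close>] GG_bound[OF ab] in auto)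
    then show "\<bar>phi f g t x - phi f g s x\<bar> \<le> pi * (t - s)" using \<open>s \<le> t\<close> by simp
  qed simp
  fix s t :: real assume st: "0 \<le> s \<and> s < t \<and> t \<le> 1"
  have si: "set_integrable lborel {s..t} (GG a b)"
    by (rule borel_integrable_atLeastAtMost'[OF GG_cont])
  show "set_integrable lborel {s..t} (\<lambda>r. vv r (phi f g r x))" unfolding eqf by (rule si)
  show "phi f g t x - phi f g s x = (LINT r:{s..t}|lborel. vv r (phi f g r x))"
    unfolding eqf set_borel_integral_eq_integral(2)[OF si]
    using int[of s t] st by (simp add: integral_unique)
qed

lemma L2_vv: "L2_H10 vv"
  unfolding L2_H10_def
proof (intro exI[of _ ww] conjI ballI)
  show "(\<lambda>p. ww (fst p) (snd p)) \<in> borel_measurable borel" by (rule ww_joint_meas)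
  show "set_integrable lborel ({0..1} \<times> {0..1}) (\<lambda>p. (ww (fst p) (snd p))\<^sup>2)"
    by (rule prod_integrable)
  fix t :: real assume "t \<in> {0..1}"
  show "H10_with_deriv (vv t) (ww t)"
    unfolding H10_with_deriv_def
  proof (intro conjI ballI)
    show "ww t \<in> borel_measurable lborel" by (rule ww_meas)
    show "set_integrable lborel {0..1} (\<lambda>y. (ww t y)\<^sup>2)"
      using inner_sq(2)[of t] unfolding set_integrable_def by simp
    show "set_integrable lborel {0..1} (ww t)" by (rule ww_integrable)
    fix x :: real assume "x \<in> {0..1}"
    then show "vv t x = (LINT y:{0..x}|lborel. ww t y)" using ww_lint by simp
  next
    show "vv t 1 = 0" by (rule vv_one)
  qed
qed

lemma all_rel: assumes "f \<in> Mon_plus" "g \<in> Mon_plus" shows "flow_rel f g"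
proof -
  have f: "mono_on {0..1} f" "\<And>x. x \<in> {0..1} \<Longrightarrow> f x \<in> {0..1}"
    and g: "mono_on {0..1} g" "\<And>x. x \<in> {0..1} \<Longrightarrow> g x \<in> {0..1}"
    using assms unfolding Mon_plus_def by (auto simp: image_subset_iff)
  show ?thesis unfolding flow_rel_def
  proof (intro exI conjI)
    show "L2_H10 vv" by (rule L2_vv)
    show "lagrangian_flow vv (phi f g)" by (rule flow_ok) (use f g in auto)
    show "\<forall>x\<in>{0..1}. phi f g 0 x = f x \<and> phi f g 1 x = g x"
      by (simp add: phi_def cc_vals)
  qed
qed

theorem mainTheorem3:
  shows "(\<forall>f\<in>Mon_plus. \<forall>g\<in>Mon_plus. flow_rel f g \<longrightarrow> flow_rel g f) \<and>
         (\<forall>f\<in>Mon_plus. \<forall>g\<in>Mon_plus. \<forall>h\<in>Mon_plus.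
            flow_rel f g \<and> flow_rel g h \<longrightarrow> flow_rel f h) \<and>
         (\<forall>f\<in>Mon_plus. \<forall>g\<in>Mon_plus. flow_rel f g)"
  using all_rel by blast

thm_deps mainTheorem3

end
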